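(* Let $P$ be a $6\times 6$ unitary pattern that has a row $r$ of weight $4$ and no row of weight $5$ or more. Then at least one of the following holds: (i) there is another row of $P$ of weight $4$ with the same support as $r$, and there is a row of $P$ of weight $2$ whose support is contained in the support of $r$; or (ii) $P$ has at least four rows (counting $r$) of weight at least $3$. In both cases, $P$ has at least four rows of weight at least $2$.
   Context: The pattern of a complex matrix is the $0/1$ matrix obtained by replacing each nonzero entry by $1$. A unitary pattern is a $0/1$ matrix that is the pattern of some unitary matrix. For a row of a $0/1$ matrix, its support is the set of column indices where it has a $1$, and its weight is the number of its ones. *)

theory Defs
  imports "HOL-Analysis.Analysis"
begin

definition conj_transpose :: "complex ^'n^'m \<Rightarrow> complex ^'m^'n" where
  "conj_transpose A = (\<chi> i j. cnj (A $ j $ i))"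

definition unitary_mat :: "complex ^'n^'n \<Rightarrow> bool" where
  "unitary_mat U \<longleftrightarrow> U ** conj_transpose U = mat 1 \<and> conj_transpose U ** U = mat 1"

definition pattern :: "complex ^'n^'m \<Rightarrow> nat ^'n^'m" where
  "pattern A = (\<chi> i j. if A $ i $ j \<noteq> 0 then 1 else 0)"

definition unitary_pattern :: "nat ^'n^'n \<Rightarrow> bool" where
  "unitary_pattern P \<longleftrightarrow> (\<exists>U. unitary_mat U \<and> pattern U = P)"

definition row_support :: "nat ^'n^'m \<Rightarrow> 'm \<Rightarrow> 'n set" where
  "row_support P i = {j. P $ i $ j = 1}"

definition row_weight :: "nat ^'n^'m \<Rightarrow> 'm \<Rightarrow> nat" where
  "row_weight P i = card (row_support P i)"

end

theory Submission
  imports Defs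
begin

lemma alg3:
  fixes x1 x2 y1 y2 z1 z2 :: complex
  assumes nz: "x1 \<noteq> 0" "y1 \<noteq> 0" "y2 \<noteq> 0" "z2 \<noteq> 0"
  and e1: "x1 * cnj y1 + x2 * cnj y2 = 0"
  and e2: "x1 * cnj z1 + x2 * cnj z2 = 0"
  and e3: "y1 * cnj z1 + y2 * cnj z2 = 0"
  shows False
proof -
  have h: "x2 * cnj z2 = - (x1 * cnj z1)" using e2 by (simp add: eq_neg_iff_add_eq_0 add.commute)
  have "cnj z2 * (y2 * x1 - y1 * x2) = y2 * x1 * cnj z2 - y1 * (x2 * cnj z2)" by (simp add: algebra_simps)
  also have "\<dots> = y2 * x1 * cnj z2 + y1 * (x1 * cnj z1)" using h by simp
  also have "\<dots> = x1 * (y1 * cnj z1 + y2 * cnj z2)" by (simp add: algebra_simps)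
  finally have "cnj z2 * (y2 * x1 - y1 * x2) = x1 * (y1 * cnj z1 + y2 * cnj z2)" .
  then have "y2 * x1 = y1 * x2" using e3 nz by simp
  then have "x1 * (y1 * cnj y1 + y2 * cnj y2) = y1 * (x1 * cnj y1 + x2 * cnj y2)"
    by (simp add: algebra_simps)
  then have "x1 * (y1 * cnj y1 + y2 * cnj y2) = 0" using e1 by simp
  then have s0: "y1 * cnj y1 + y2 * cnj y2 = 0" using nz by simp
  have "y1 * cnj y1 = complex_of_real ((cmod y1)^2)" using complex_norm_square[of y1] by simp
  moreover have "y2 * cnj y2 = complex_of_real ((cmod y2)^2)" using complex_norm_square[of y2] by simp
  ultimately have "(cmod y1)^2 + (cmod y2)^2 = 0" using s0
    by (metis of_real_add of_real_eq_0_iff)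
  then show False using nz by (simp add: add_nonneg_eq_0_iff)
qed


lemma card_compl6: "card (- (A::6 set)) = 6 - card A"
proof -
  have "- A = UNIV - A" by auto
  then have "card (- A) = card (UNIV::6 set) - card A"
    by (simp add: card_Diff_subset)
  then show ?thesis by simp
qed

lemma card_le2_cover:
  assumes "finite A" "card A \<le> 2"
  shows "\<exists>h1 h2. A \<subseteq> {h1, h2}"
proof -
  have "card A = 0 \<or> card A = 1 \<or> card A = 2" using assms(2) by linarith
  then show ?thesis
  proof (elim disjE)
    assume "card A = 0" then have "A = {}" using assms(1) by simp
    then show ?thesis by blast
  next
    assume "card A = 1" then obtain x where "A = {x}" by (auto simp: card_1_singleton_iff)
    then show ?thesis by blast
  next
    assume "card A = 2" then obtain x y where "A = {x,y}" by (auto simp: card_2_iff)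
    then show ?thesis by blast
  qed
qed

lemma comb:
  fixes sp :: "6 \<Rightarrow> 6 set" and r :: 6
  assumes F1: "\<And>i i'. i \<noteq> i' \<Longrightarrow> card (sp i \<inter> sp i') \<noteq> 1"
  and F2: "\<And>j k. j \<noteq> k \<Longrightarrow> card {i. j \<in> sp i \<and> k \<in> sp i} \<noteq> 1"
  and F3: "\<And>i. sp i \<noteq> {}"
  and F4: "\<And>t1 t2 a b c. t1 \<noteq> t2 \<Longrightarrow> a \<noteq> b \<Longrightarrow> a \<noteq> c \<Longrightarrow> b \<noteq> c \<Longrightarrow>
      sp a = {t1,t2} \<Longrightarrow> sp b = {t1,t2} \<Longrightarrow> sp c = {t1,t2} \<Longrightarrow> False"
  and W: "card (sp r) = 4" and Wle: "\<And>i. card (sp i) \<le> 4"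
  shows "(((\<exists>r'. r' \<noteq> r \<and> card (sp r') = 4 \<and> sp r' = sp r)
            \<and> (\<exists>s. card (sp s) = 2 \<and> sp s \<subseteq> sp r))
         \<or> card {i. card (sp i) \<ge> 3} \<ge> 4)
         \<and> card {i. card (sp i) \<ge> 2} \<ge> 4"
proof -
  define S where "S = sp r"
  have cS: "card S = 4" using W S_def by simp
  have D2: "sp i \<inter> S = {} \<or> card (sp i \<inter> S) \<ge> 2" if "i \<noteq> r" for i
  proof -
    have "card (sp i \<inter> S) \<noteq> 1" using F1[OF that] S_def by simp
    moreover have "card (sp i \<inter> S) = 0 \<Longrightarrow> sp i \<inter> S = {}" by simp
    ultimately show ?thesis by linarith
  qed
  define Z where "Z = {i. sp i \<inter> S = {}}"
  have D1: "card Z \<le> 2"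
  proof (rule ccontr)
    assume "\<not> card Z \<le> 2"
    then have "3 \<le> card Z" by simp
    then obtain B where B: "B \<subseteq> Z" "card B = 3" by (meson obtain_subset_with_card_n)
    then obtain a b c where abc: "B = {a,b,c}" "a \<noteq> b" "b \<noteq> c" "a \<noteq> c"
      by (auto simp: card_3_iff)
    have "card (- S) = 2" using cS card_compl6 by simp
    then obtain t1 t2 where T: "- S = {t1,t2}" "t1 \<noteq> t2" by (auto simp: card_2_iff)
    have sub: "sp x = {t1} \<or> sp x = {t2} \<or> sp x = {t1,t2}" if "x \<in> Z" for x
    proof -
      have "sp x \<subseteq> {t1,t2}" using that T(1) Z_def by auto
      then show ?thesis using F3[of x] by auto
    qed
    have a: "sp a = {t1} \<or> sp a = {t2} \<or> sp a = {t1,t2}" using sub B abc by auto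
    have b: "sp b = {t1} \<or> sp b = {t2} \<or> sp b = {t1,t2}" using sub B abc by auto
    have c: "sp c = {t1} \<or> sp c = {t2} \<or> sp c = {t1,t2}" using sub B abc by auto
    have ab: "card (sp a \<inter> sp b) \<noteq> 1" using F1 abc by auto
    have ac: "card (sp a \<inter> sp c) \<noteq> 1" using F1 abc by auto
    have bc: "card (sp b \<inter> sp c) \<noteq> 1" using F1 abc by auto
    have "sp a = {t1,t2} \<and> sp b = {t1,t2} \<and> sp c = {t1,t2}"
      using a b c ab ac bc T(2) by (elim disjE) (simp_all add: Int_insert_left Int_insert_right)
    then show False using F4[OF T(2) abc(2) abc(4) abc(3)] by blast
  qed
  have part2: "card {i. card (sp i) \<ge> 2} \<ge> 4"
  proof -
    have "- Z \<subseteq> {i. card (sp i) \<ge> 2}"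
    proof
      fix i assume "i \<in> - Z"
      then have ne: "sp i \<inter> S \<noteq> {}" using Z_def by auto
      show "i \<in> {i. card (sp i) \<ge> 2}"
      proof (cases "i = r")
        case True then show ?thesis using W by simp
      next
        case False
        then have "card (sp i \<inter> S) \<ge> 2" using D2 ne by blast
        moreover have "card (sp i \<inter> S) \<le> card (sp i)" by (simp add: card_mono)
        ultimately show ?thesis by simp
      qed
    qed
    then have "card (- Z) \<le> card {i. card (sp i) \<ge> 2}" by (simp add: card_mono)
    moreover have "card (- Z) \<ge> 4" using D1 card_compl6[of Z] by simp
    ultimately show ?thesis by simp
  qed
  define X where "X = {i. card (sp i) \<ge> 3}"
  have part1: "((\<exists>r'. r' \<noteq> r \<and> card (sp r') = 4 \<and> sp r' = sp r)
            \<and> (\<exists>s. card (sp s) = 2 \<and> sp s \<subseteq> sp r))" if X3: "card X \<le> 3"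
  proof
    have rX: "r \<in> X" using W X_def by simp
    show "\<exists>s. card (sp s) = 2 \<and> sp s \<subseteq> sp r"
    proof -
      have "card (X \<union> Z) \<le> 5" using card_Un_le[of X Z] X3 D1 by simp
      then have "card (- (X \<union> Z)) \<ge> 1" using card_compl6[of "X \<union> Z"] by simp
      then obtain s where s: "s \<in> - (X \<union> Z)" by (metis card.empty ex_in_conv not_one_le_zero)
      have sr: "s \<noteq> r" using s rX by auto
      have le2: "card (sp s) \<le> 2" using s X_def by auto
      have ne: "sp s \<inter> S \<noteq> {}" using s Z_def by auto
      have ge2: "card (sp s \<inter> S) \<ge> 2" using D2[OF sr] ne by blast
      have "sp s \<inter> S = sp s"
        by (rule card_seteq) (use le2 ge2 in auto)
      moreover have "card (sp s) = 2"
        using le2 ge2 card_mono[of "sp s" "sp s \<inter> S"] by simp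
      ultimately show ?thesis using S_def by blast
    qed
    show "\<exists>r'. r' \<noteq> r \<and> card (sp r') = 4 \<and> sp r' = sp r"
    proof (rule ccontr)
      assume NA0: "\<not> ?thesis"
      have NA: "\<not> S \<subseteq> sp i" if "i \<noteq> r" for i
      proof
        assume "S \<subseteq> sp i"
        have "S = sp i" by (intro card_seteq) (use \<open>S \<subseteq> sp i\<close> Wle[of i] cS in auto)
        then show False using NA0 that cS S_def by auto
      qed
      have "card (X - {r}) \<le> 2" using X3 rX by simp
      then obtain h1 h2 where H: "X - {r} \<subseteq> {h1, h2}" using card_le2_cover[of "X - {r}"] by auto
      have PP: "\<exists>i. i \<noteq> r \<and> j \<in> sp i \<and> k \<in> sp i \<and> (i = h1 \<or> i = h2 \<or> sp i = {j,k})"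
        if "j \<in> S" "k \<in> S" "j \<noteq> k" for j k
      proof -
        have "card {i. j \<in> sp i \<and> k \<in> sp i} \<noteq> 1" using F2 that by blast
        moreover have "r \<in> {i. j \<in> sp i \<and> k \<in> sp i}" using that S_def by auto
        ultimately have "{i. j \<in> sp i \<and> k \<in> sp i} \<noteq> {r}" by auto
        then obtain i where i: "i \<noteq> r" "j \<in> sp i" "k \<in> sp i"
          using \<open>r \<in> {i. j \<in> sp i \<and> k \<in> sp i}\<close> by blast
        show ?thesis
        proof (cases "i = h1 \<or> i = h2")
          case True then show ?thesis using i by blast
        next
          case False
          then have "i \<notin> X" using H i(1) by blast
          then have "card (sp i) \<le> 2" using X_def by simp
          then have "{j,k} = sp i" by (intro card_seteq) (use i that in auto)
          then show ?thesis using i by blast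
        qed
      qed
      have LL: False if "sp i = {j,k}" "sp i' = {j,l}" "j \<noteq> k" "j \<noteq> l" "k \<noteq> l" for i i' j k l
      proof -
        have "i \<noteq> i'" using that by auto
        moreover have "sp i \<inter> sp i' = {j}" using that by auto
        ultimately show False using F1 by fastforce
      qed
      have LH: False if "sp i = {j,k}" "j \<noteq> k" "j \<in> sp h" "k \<notin> sp h" for i j k h
      proof -
        have "i \<noteq> h" using that by auto
        moreover have "sp i \<inter> sp h = {j}" using that by auto
        ultimately show False using F1 by fastforce
      qed
      obtain a where aS: "a \<in> S" using cS by (metis card.empty ex_in_conv zero_neq_numeral)
      have "card (S - {a}) = 3" using cS aS by simp
      then obtain b c d where bcd: "S - {a} = {b,c,d}" "b \<noteq> c" "c \<noteq> d" "b \<noteq> d"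
        by (auto simp: card_3_iff)
      have Sabcd: "S = {a,b,c,d}" "a \<noteq> b" "a \<noteq> c" "a \<noteq> d" using bcd aS by auto
      define low where "low = (\<lambda>j k. \<exists>i. sp i = {j,k})"
      have lowsym: "low j k = low k j" for j k unfolding low_def by (simp add: insert_commute)
      have P0: "(h1 \<noteq> r \<and> a \<in> sp h1 \<and> b \<in> sp h1) \<or> (h2 \<noteq> r \<and> a \<in> sp h2 \<and> b \<in> sp h2) \<or> low a b"
        using PP[of a b] Sabcd bcd unfolding low_def by auto
      have P1: "(h1 \<noteq> r \<and> a \<in> sp h1 \<and> c \<in> sp h1) \<or> (h2 \<noteq> r \<and> a \<in> sp h2 \<and> c \<in> sp h2) \<or> low a c"
        using PP[of a c] Sabcd bcd unfolding low_def by auto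
      have P2: "(h1 \<noteq> r \<and> a \<in> sp h1 \<and> d \<in> sp h1) \<or> (h2 \<noteq> r \<and> a \<in> sp h2 \<and> d \<in> sp h2) \<or> low a d"
        using PP[of a d] Sabcd bcd unfolding low_def by auto
      have P3: "(h1 \<noteq> r \<and> b \<in> sp h1 \<and> c \<in> sp h1) \<or> (h2 \<noteq> r \<and> b \<in> sp h2 \<and> c \<in> sp h2) \<or> low b c"
        using PP[of b c] Sabcd bcd unfolding low_def by auto
      have P4: "(h1 \<noteq> r \<and> b \<in> sp h1 \<and> d \<in> sp h1) \<or> (h2 \<noteq> r \<and> b \<in> sp h2 \<and> d \<in> sp h2) \<or> low b d"
        using PP[of b d] Sabcd bcd unfolding low_def by auto
      have P5: "(h1 \<noteq> r \<and> c \<in> sp h1 \<and> d \<in> sp h1) \<or> (h2 \<noteq> r \<and> c \<in> sp h2 \<and> d \<in> sp h2) \<or> low c d"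
        using PP[of c d] Sabcd bcd unfolding low_def by auto
      have Q0: "\<not> (low a b \<and> low a c)" using LL[of _ a b _ c] Sabcd bcd unfolding low_def by blast
      have Q1: "\<not> (low a b \<and> low a d)" using LL[of _ a b _ d] Sabcd bcd unfolding low_def by blast
      have Q2: "\<not> (low a c \<and> low a d)" using LL[of _ a c _ d] Sabcd bcd unfolding low_def by blast
      have Q3: "\<not> (low b a \<and> low b c)" using LL[of _ b a _ c] Sabcd bcd unfolding low_def by blast
      have Q4: "\<not> (low b a \<and> low b d)" using LL[of _ b a _ d] Sabcd bcd unfolding low_def by blast
      have Q5: "\<not> (low b c \<and> low b d)" using LL[of _ b c _ d] Sabcd bcd unfolding low_def by blast
      have Q6: "\<not> (low c a \<and> low c b)" using LL[of _ c a _ b] Sabcd bcd unfolding low_def by blast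
      have Q7: "\<not> (low c a \<and> low c d)" using LL[of _ c a _ d] Sabcd bcd unfolding low_def by blast
      have Q8: "\<not> (low c b \<and> low c d)" using LL[of _ c b _ d] Sabcd bcd unfolding low_def by blast
      have Q9: "\<not> (low d a \<and> low d b)" using LL[of _ d a _ b] Sabcd bcd unfolding low_def by blast
      have Q10: "\<not> (low d a \<and> low d c)" using LL[of _ d a _ c] Sabcd bcd unfolding low_def by blast
      have Q11: "\<not> (low d b \<and> low d c)" using LL[of _ d b _ c] Sabcd bcd unfolding low_def by blast
      have R0: "low a b \<Longrightarrow> (a \<in> sp h1 \<longleftrightarrow> b \<in> sp h1)" using LH[of _ a b h1] LH[of _ b a h1] Sabcd bcd unfolding low_def by (metis insert_commute)
      have R1: "low a b \<Longrightarrow> (a \<in> sp h2 \<longleftrightarrow> b \<in> sp h2)" using LH[of _ a b h2] LH[of _ b a h2] Sabcd bcd unfolding low_def by (metis insert_commute)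
      have R2: "low a c \<Longrightarrow> (a \<in> sp h1 \<longleftrightarrow> c \<in> sp h1)" using LH[of _ a c h1] LH[of _ c a h1] Sabcd bcd unfolding low_def by (metis insert_commute)
      have R3: "low a c \<Longrightarrow> (a \<in> sp h2 \<longleftrightarrow> c \<in> sp h2)" using LH[of _ a c h2] LH[of _ c a h2] Sabcd bcd unfolding low_def by (metis insert_commute)
      have R4: "low a d \<Longrightarrow> (a \<in> sp h1 \<longleftrightarrow> d \<in> sp h1)" using LH[of _ a d h1] LH[of _ d a h1] Sabcd bcd unfolding low_def by (metis insert_commute)
      have R5: "low a d \<Longrightarrow> (a \<in> sp h2 \<longleftrightarrow> d \<in> sp h2)" using LH[of _ a d h2] LH[of _ d a h2] Sabcd bcd unfolding low_def by (metis insert_commute)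
      have R6: "low b c \<Longrightarrow> (b \<in> sp h1 \<longleftrightarrow> c \<in> sp h1)" using LH[of _ b c h1] LH[of _ c b h1] Sabcd bcd unfolding low_def by (metis insert_commute)
      have R7: "low b c \<Longrightarrow> (b \<in> sp h2 \<longleftrightarrow> c \<in> sp h2)" using LH[of _ b c h2] LH[of _ c b h2] Sabcd bcd unfolding low_def by (metis insert_commute)
      have R8: "low b d \<Longrightarrow> (b \<in> sp h1 \<longleftrightarrow> d \<in> sp h1)" using LH[of _ b d h1] LH[of _ d b h1] Sabcd bcd unfolding low_def by (metis insert_commute)
      have R9: "low b d \<Longrightarrow> (b \<in> sp h2 \<longleftrightarrow> d \<in> sp h2)" using LH[of _ b d h2] LH[of _ d b h2] Sabcd bcd unfolding low_def by (metis insert_commute)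
      have R10: "low c d \<Longrightarrow> (c \<in> sp h1 \<longleftrightarrow> d \<in> sp h1)" using LH[of _ c d h1] LH[of _ d c h1] Sabcd bcd unfolding low_def by (metis insert_commute)
      have R11: "low c d \<Longrightarrow> (c \<in> sp h2 \<longleftrightarrow> d \<in> sp h2)" using LH[of _ c d h2] LH[of _ d c h2] Sabcd bcd unfolding low_def by (metis insert_commute)
      have Nh1: "h1 \<noteq> r \<Longrightarrow> \<not> (a \<in> sp h1 \<and> b \<in> sp h1 \<and> c \<in> sp h1 \<and> d \<in> sp h1)" using NA[of h1] Sabcd by auto
      have Nh2: "h2 \<noteq> r \<Longrightarrow> \<not> (a \<in> sp h2 \<and> b \<in> sp h2 \<and> c \<in> sp h2 \<and> d \<in> sp h2)" using NA[of h2] Sabcd by auto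
      show False using P0 P1 P2 P3 P4 P5 Q0 Q1 Q2 Q3 Q4 Q5 Q6 Q7 Q8 Q9 Q10 Q11 R0 R1 R2 R3 R4 R5 R6 R7 R8 R9 R10 R11 Nh1 Nh2 by argo
    qed
  qed
  have "card X \<le> 3 \<or> card X \<ge> 4" by linarith
  then show ?thesis using part1 part2 unfolding X_def by blast
qed

lemma unit_facts:
  fixes U :: "complex^6^6"
  assumes "unitary_mat U"
  shows row_orth: "\<And>i i'. i \<noteq> i' \<Longrightarrow> (\<Sum>j\<in>UNIV. U$i$j * cnj (U$i'$j)) = 0"
    and row_diag: "\<And>i. (\<Sum>j\<in>UNIV. U$i$j * cnj (U$i$j)) = 1"
    and col_orth: "\<And>j k. j \<noteq> k \<Longrightarrow> (\<Sum>i\<in>UNIV. cnj (U$i$j) * U$i$k) = 0"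
proof -
  have A: "U ** conj_transpose U = mat 1" and B: "conj_transpose U ** U = mat 1"
    using assms unfolding unitary_mat_def by auto
  have r: "(\<Sum>j\<in>UNIV. U$i$j * cnj (U$i'$j)) = (if i = i' then 1 else 0)" for i i'
  proof -
    have "(U ** conj_transpose U) $ i $ i' = (mat 1 :: complex^6^6) $ i $ i'" using A by simp
    then show ?thesis by (simp add: matrix_matrix_mult_def conj_transpose_def mat_def)
  qed
  have c: "(\<Sum>i\<in>UNIV. cnj (U$i$j) * U$i$k) = (if j = k then 1 else 0)" for j k
  proof -
    have "(conj_transpose U ** U) $ j $ k = (mat 1 :: complex^6^6) $ j $ k" using B by simp
    then show ?thesis by (simp add: matrix_matrix_mult_def conj_transpose_def mat_def)
  qed
  show "\<And>i i'. i \<noteq> i' \<Longrightarrow> (\<Sum>j\<in>UNIV. U$i$j * cnj (U$i'$j)) = 0" using r by simp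
  show "\<And>i. (\<Sum>j\<in>UNIV. U$i$j * cnj (U$i$j)) = 1" using r by simp
  show "\<And>j k. j \<noteq> k \<Longrightarrow> (\<Sum>i\<in>UNIV. cnj (U$i$j) * U$i$k) = 0" using c by simp
qed

lemma sum_single0:
  fixes f :: "6 \<Rightarrow> complex"
  assumes "\<And>j. j \<noteq> j0 \<Longrightarrow> f j = 0"
  shows "sum f UNIV = f j0"
proof -
  have "sum f UNIV = sum f {j0}" by (rule sum.mono_neutral_right) (use assms in auto)
  then show ?thesis by simp
qed

lemma sum_two0:
  fixes f :: "6 \<Rightarrow> complex"
  assumes "\<And>j. j \<noteq> t1 \<Longrightarrow> j \<noteq> t2 \<Longrightarrow> f j = 0" "t1 \<noteq> t2"
  shows "sum f UNIV = f t1 + f t2"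
proof -
  have "sum f UNIV = sum f {t1,t2}" by (rule sum.mono_neutral_right) (use assms in auto)
  then show ?thesis using assms(2) by simp
qed

theorem mainTheorem5:
  fixes P :: "nat ^ 6 ^ 6" and r :: 6
  assumes "unitary_pattern P"
    and "row_weight P r = 4"
    and "\<forall>i. row_weight P i \<le> 4"
  shows "(((\<exists>r'. r' \<noteq> r \<and> row_weight P r' = 4 \<and> row_support P r' = row_support P r)
            \<and> (\<exists>s. row_weight P s = 2 \<and> row_support P s \<subseteq> row_support P r))
         \<or> card {i. row_weight P i \<ge> 3} \<ge> 4)
         \<and> card {i. row_weight P i \<ge> 2} \<ge> 4"
proof -
  obtain U where U: "unitary_mat U" "pattern U = P" using assms(1) unfolding unitary_pattern_def by blast
  define sp where "sp = row_support P"
  have spU: "sp i = {j. U$i$j \<noteq> 0}" for i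
    using U(2) unfolding sp_def row_support_def pattern_def by auto
  have mem: "j \<in> sp i \<longleftrightarrow> U$i$j \<noteq> 0" for i j using spU by simp
  have F1: "card (sp i \<inter> sp i') \<noteq> 1" if "i \<noteq> i'" for i i'
  proof
    assume "card (sp i \<inter> sp i') = 1"
    then obtain j0 where j0: "sp i \<inter> sp i' = {j0}" by (auto simp: card_1_singleton_iff)
    have "(\<Sum>j\<in>UNIV. U$i$j * cnj (U$i'$j)) = U$i$j0 * cnj (U$i'$j0)"
    proof (rule sum_single0)
      fix j assume "j \<noteq> j0"
      then have "j \<notin> sp i \<inter> sp i'" using j0 by auto
      then show "U$i$j * cnj (U$i'$j) = 0" using mem by auto
    qed
    moreover have "U$i$j0 * cnj (U$i'$j0) \<noteq> 0" using j0 mem by auto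
    ultimately show False using row_orth[OF U(1) that] by simp
  qed
  have F2: "card {i. j \<in> sp i \<and> k \<in> sp i} \<noteq> 1" if "j \<noteq> k" for j k
  proof
    assume "card {i. j \<in> sp i \<and> k \<in> sp i} = 1"
    then obtain i0 where i0: "{i. j \<in> sp i \<and> k \<in> sp i} = {i0}" by (auto simp: card_1_singleton_iff)
    have "(\<Sum>i\<in>UNIV. cnj (U$i$j) * U$i$k) = cnj (U$i0$j) * U$i0$k"
    proof (rule sum_single0)
      fix i assume "i \<noteq> i0"
      then have "i \<notin> {i. j \<in> sp i \<and> k \<in> sp i}" using i0 by auto
      then show "cnj (U$i$j) * U$i$k = 0" using mem by auto
    qed
    moreover have "cnj (U$i0$j) * U$i0$k \<noteq> 0" using i0 mem by auto
    ultimately show False using col_orth[OF U(1) that] by simp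
  qed
  have F3: "sp i \<noteq> {}" for i
  proof
    assume "sp i = {}"
    then have "U$i$j = 0" for j using mem by auto
    then show False using row_diag[OF U(1), of i] by simp
  qed
  have two: "(\<Sum>j\<in>UNIV. U$a$j * cnj (U$b$j)) = U$a$t1 * cnj (U$b$t1) + U$a$t2 * cnj (U$b$t2)"
    if "sp a = {t1,t2}" "t1 \<noteq> t2" for a b t1 t2
  proof (rule sum_two0)
    fix j assume "j \<noteq> t1" "j \<noteq> t2"
    then have "j \<notin> sp a" using that by auto
    then show "U$a$j * cnj (U$b$j) = 0" using mem by auto
  qed fact
  have F4: False if "t1 \<noteq> t2" "a \<noteq> b" "a \<noteq> c" "b \<noteq> c"
      "sp a = {t1,t2}" "sp b = {t1,t2}" "sp c = {t1,t2}" for t1 t2 a b c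
  proof -
    have e1: "U$a$t1 * cnj (U$b$t1) + U$a$t2 * cnj (U$b$t2) = 0"
      using two[of a t1 t2 b] row_orth[OF U(1), of a b] that by simp
    have e2: "U$a$t1 * cnj (U$c$t1) + U$a$t2 * cnj (U$c$t2) = 0"
      using two[of a t1 t2 c] row_orth[OF U(1), of a c] that by simp
    have e3: "U$b$t1 * cnj (U$c$t1) + U$b$t2 * cnj (U$c$t2) = 0"
      using two[of b t1 t2 c] row_orth[OF U(1), of b c] that by simp
    have nz: "U$a$t1 \<noteq> 0" "U$b$t1 \<noteq> 0" "U$b$t2 \<noteq> 0" "U$c$t2 \<noteq> 0"
      using that mem by auto
    show False by (rule alg3[OF nz e1 e2 e3])
  qed
  have W: "card (sp r) = 4" using assms(2) unfolding sp_def row_weight_def by simp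
  have Wle: "card (sp i) \<le> 4" for i using assms(3) unfolding sp_def row_weight_def by simp
  have C: "(((\<exists>r'. r' \<noteq> r \<and> card (sp r') = 4 \<and> sp r' = sp r)
            \<and> (\<exists>s. card (sp s) = 2 \<and> sp s \<subseteq> sp r))
         \<or> card {i. card (sp i) \<ge> 3} \<ge> 4)
         \<and> card {i. card (sp i) \<ge> 2} \<ge> 4"
      apply (rule comb[of sp r])
    using F1 apply blast
    using F2 apply blast
    using F3 apply blast
    using F4 apply blast
    using W apply blast
    using Wle apply blast
    done
  show ?thesis using C unfolding sp_def row_weight_def .
qed

end
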